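(* For integers $k\ge1$, $1\le j\le k$, and $x\in\mathbb R$, \[ \sum_{i=0}^{k-1}x^i\,(2k-j)_{k-i}\,\frac{(k-1+i)!}{(k-1-i)!\,i!}=\frac{(j-1)!\,(2k-j)!}{(k-1)!}\sum_{\ell=0}^{j-1}\binom{k-1}{\ell}\binom{k-1}{j-1-\ell}x^\ell(1+x)^{k-1-\ell}, \] where $(n)_r=n(n-1)\cdots(n-r+1)$ denotes the falling factorial, $(n)_0=1$. *)

theory Defs
  imports Complex_Main
begin

definition falling_fact :: "nat \<Rightarrow> nat \<Rightarrow> nat" where
  "falling_fact n r = (\<Prod>i<r. n - i)"

end

theory Submission
  imports Defs
begin

lemma inner_id:
  fixes x :: real
  assumes "l \<le> n"
  shows "(\<Sum>i\<le>n. real (n choose i) * real (i choose l) * x ^ i)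
       = real (n choose l) * x ^ l * (1 + x) ^ (n - l)"
proof -
  have split: "{..n} = {..<l} \<union> {l..n}" using assms by auto
  have z: "(\<Sum>i<l. real (n choose i) * real (i choose l) * x ^ i) = 0"
    by (intro sum.neutral) auto
  have "(\<Sum>i\<in>{l..n}. real (n choose i) * real (i choose l) * x ^ i)
      = (\<Sum>t\<le>n-l. real (n choose (l+t)) * real ((l+t) choose l) * x ^ (l+t))"
  proof -
    have "{l..n} = (\<lambda>t. l + t) ` {..n-l}" using assms
      by (auto simp: image_iff) (metis add_diff_inverse_nat atMost_iff diff_le_mono not_less)
    moreover have "inj_on (\<lambda>t. l + t) {..n-l}" by (auto simp: inj_on_def)
    ultimately show ?thesis by (simp add: sum.reindex)
  qed
  also have "\<dots> = (\<Sum>t\<le>n-l. real (n choose l) * x ^ l * (real ((n-l) choose t) * x ^ t * 1 ^ (n - l - t)))"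
  proof (intro sum.cong refl)
    fix t assume t: "t \<in> {..n-l}"
    have "(n choose (l+t)) * ((l+t) choose l) = (n choose l) * ((n - l) choose t)"
      using choose_mult[of l "l+t" n] t assms by simp
    hence "real (n choose (l+t)) * real ((l+t) choose l) = real (n choose l) * real ((n - l) choose t)"
      by (metis of_nat_mult)
    thus "real (n choose (l+t)) * real ((l+t) choose l) * x ^ (l+t) = real (n choose l) * x ^ l * (real ((n-l) choose t) * x ^ t * 1 ^ (n - l - t))"
      by (simp add: power_add)
  qed
  also have "\<dots> = real (n choose l) * x ^ l * (x + 1) ^ (n - l)"
    by (simp add: binomial_ring[of x 1 "n-l"] sum_distrib_left)
  finally show ?thesis using z split
    by (simp add: sum.union_disjoint ivl_disj_int add.commute)
qed

lemma core_id:
  fixes x :: real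
  assumes "m \<le> n"
  shows "(\<Sum>i\<le>n. real (n choose i) * real ((n + i) choose m) * x ^ i)
       = (\<Sum>l\<le>m. real (n choose l) * real (n choose (m - l)) * x ^ l * (1 + x) ^ (n - l))"
proof -
  have "(\<Sum>i\<le>n. real (n choose i) * real ((n + i) choose m) * x ^ i)
      = (\<Sum>i\<le>n. \<Sum>l\<le>m. real (n choose (m - l)) * (real (n choose i) * real (i choose l) * x ^ i))"
  proof (intro sum.cong refl)
    fix i
    have "real ((n + i) choose m) = (\<Sum>l\<le>m. real (i choose l) * real (n choose (m - l)))"
      using vandermonde[of i n m] by (simp add: add.commute flip: of_nat_mult of_nat_sum)
    thus "real (n choose i) * real ((n + i) choose m) * x ^ i = (\<Sum>l\<le>m. real (n choose (m - l)) * (real (n choose i) * real (i choose l) * x ^ i))"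
      by (simp add: sum_distrib_left sum_distrib_right mult_ac)
  qed
  also have "\<dots> = (\<Sum>l\<le>m. real (n choose (m - l)) * (\<Sum>i\<le>n. real (n choose i) * real (i choose l) * x ^ i))"
    by (subst sum.swap) (simp add: sum_distrib_left)
  also have "\<dots> = (\<Sum>l\<le>m. real (n choose l) * real (n choose (m - l)) * x ^ l * (1 + x) ^ (n - l))"
    using assms by (intro sum.cong refl) (simp add: inner_id)
  finally show ?thesis .
qed



lemma falling_fact_nat:
  assumes "r \<le> a"
  shows "falling_fact a r * fact (a - r) = (fact a :: nat)"
  using assms
proof (induction r)
  case 0 thus ?case by (simp add: falling_fact_def)
next
  case (Suc r)
  have h1: "falling_fact a (Suc r) = falling_fact a r * (a - r)"
    unfolding falling_fact_def by (rule prod.lessThan_Suc)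
  have h2: "(fact (a - r) :: nat) = (a - r) * fact (a - Suc r)"
  proof -
    have d: "a - r = Suc (a - Suc r)" using Suc.prems by simp
    show ?thesis unfolding d by simp
  qed
  have "falling_fact a (Suc r) * fact (a - Suc r) = falling_fact a r * fact (a - r)"
    unfolding h1 h2 by (simp only: mult.assoc)
  also have "\<dots> = fact a" using Suc.IH Suc.prems by simp
  finally show ?case .
qed

lemma falling_fact_real:
  assumes "r \<le> a"
  shows "real (falling_fact a r) = fact a / fact (a - r)"
proof -
  have "real (falling_fact a r) * fact (a - r) = fact a"
    using falling_fact_nat[OF assms] by (metis of_nat_fact of_nat_mult)
  moreover have "(fact (a - r) :: real) \<noteq> 0" by simp
  ultimately show ?thesis by (metis nonzero_mult_div_cancel_right)
qed

lemma alg: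
  fixes A B C D E M N X :: real
  assumes "B \<noteq> 0" "D \<noteq> 0" "E \<noteq> 0" "M \<noteq> 0" "N \<noteq> 0"
  shows "X * (A / B) * (C / (D * E)) = M * A / N * (N / (E * D) * (C / (M * B)) * X)"
  using assms by (simp add: field_simps)

theorem mainTheorem10:
  fixes k j :: nat and x :: real
  assumes "k \<ge> 1" and "1 \<le> j" and "j \<le> k"
  shows "(\<Sum>i = 0..k-1. x ^ i * real (falling_fact (2*k - j) (k - i))
            * (fact (k - 1 + i) / (fact (k - 1 - i) * fact i)))
       = (fact (j - 1) * fact (2*k - j) / fact (k - 1))
         * (\<Sum>l = 0..j-1. real ((k - 1) choose l) * real ((k - 1) choose (j - 1 - l))
              * x ^ l * (1 + x) ^ (k - 1 - l))"
proof -
  obtain n where n: "k = Suc n" using assms(1) by (cases k) auto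
  obtain m where m: "j = Suc m" using assms(2) by (cases j) auto
  have mn: "m \<le> n" using assms(3) n m by simp
  define a where "a = 2*k - j"
  define c :: real where "c = fact m * fact a / fact n"
  have "(\<Sum>i = 0..k-1. x ^ i * real (falling_fact (2*k - j) (k - i))
            * (fact (k - 1 + i) / (fact (k - 1 - i) * fact i)))
      = (\<Sum>i\<le>n. c * (real (n choose i) * real ((n + i) choose m) * x ^ i))"
    unfolding atMost_atLeast0
  proof (intro sum.cong)
    show "{0..k-1} = {0..n}" using n by simp
    fix i assume i: "i \<in> {0..n}"
    hence il: "i \<le> n" by simp
    have ff: "real (falling_fact a (Suc n - i)) = fact a / fact (n + i - m)"
    proof -
      have h1: "Suc n - i \<le> a" "a - (Suc n - i) = n + i - m" using il mn n m a_def by auto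
      show ?thesis using falling_fact_real[OF h1(1)] unfolding h1(2) .
    qed
    have b1: "real (n choose i) = fact n / (fact i * fact (n - i))"
      using il by (rule binomial_fact)
    have b2: "real ((n + i) choose m) = fact (n + i) / (fact m * fact (n + i - m))"
      using mn by (intro binomial_fact) simp
    have e: "k - i = Suc n - i" "k - 1 + i = n + i" "k - 1 - i = n - i" "2*k-j = a" using n a_def by auto
    show "x ^ i * real (falling_fact (2 * k - j) (k - i)) * (fact (k - 1 + i) / (fact (k - 1 - i) * fact i))
        = c * (real (n choose i) * real ((n + i) choose m) * x ^ i)"
    proof -
      have nz: "(fact (n + i - m) :: real) \<noteq> 0" "(fact (n - i) :: real) \<noteq> 0" "(fact i :: real) \<noteq> 0"
        "(fact m :: real) \<noteq> 0" "(fact n :: real) \<noteq> 0" by simp_all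
      have "x ^ i * (fact a / fact (n + i - m)) * (fact (n + i) / (fact (n - i) * fact i))
          = fact m * fact a / fact n * (fact n / (fact i * fact (n - i)) * (fact (n + i) / (fact m * fact (n + i - m))) * x ^ i)"
        by (rule alg[OF nz(1) nz(2) nz(3) nz(4) nz(5)])
      thus ?thesis unfolding e ff b1 b2 c_def .
    qed
  qed
  also have "\<dots> = c * (\<Sum>i\<le>n. real (n choose i) * real ((n + i) choose m) * x ^ i)"
    by (simp add: sum_distrib_left)
  also have "\<dots> = c * (\<Sum>l\<le>m. real (n choose l) * real (n choose (m - l)) * x ^ l * (1 + x) ^ (n - l))"
    by (simp only: core_id[OF mn])
  finally have fin: "(\<Sum>i = 0..k-1. x ^ i * real (falling_fact (2*k - j) (k - i))
            * (fact (k - 1 + i) / (fact (k - 1 - i) * fact i)))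
     = c * (\<Sum>l\<le>m. real (n choose l) * real (n choose (m - l)) * x ^ l * (1 + x) ^ (n - l))" .
  have e2: "k - 1 = n" "j - 1 = m" "2*k - j = a" using n m a_def by auto
  show ?thesis using fin unfolding e2 c_def atMost_atLeast0 .
qed

end
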